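(* Let $M=(S,\Sigma,\delta,s_0,F)$ be a deterministic finite automaton, let $T\ge 1$ be an integer, and for each $s\in S$ let $P(\cdot\mid s)$ and $Q(\cdot\mid s)$ be probability distributions on $\Sigma$. Define probability distributions $P$ and $Q$ on $\Sigma^T$ by $P(x)=\prod_{t=1}^T P(\sigma_t\mid s_t)$ and $Q(x)=\prod_{t=1}^T Q(\sigma_t\mid s_t)$ for $x=\sigma_1\cdots\sigma_T$, where $s_1\cdots s_{T+1}$ is the state sequence induced by $x$. Let $\epsilon=\max_{s\in S}\mathrm{TV}(P(\sigma\mid s),Q(\sigma\mid s))$. Then $$\mathrm{TV}(P(x),Q(x))\le 2T|S|^{T+1}\epsilon.$$
   Context: A deterministic finite automaton $M=(S,\Sigma,\delta,s_0,F)$ has a finite state set $S$, a finite alphabet $\Sigma$, a transition function $\delta:S\times\Sigma\to S$, an initial state $s_0\in S$ and a set of final states $F\subseteq S$. For a string $x=\sigma_1\cdots\sigma_T\in\Sigma^T$, the induced state sequence $s_1\cdots s_{T+1}$ is given by $s_1=s_0$ and $s_{t+1}=\delta(s_t,\sigma_t)$ for $1\le t\le T$. The total variation distance between discrete distributions is defined without the factor $1/2$: $\mathrm{TV}(\mu,\nu)=\sum_a|\mu(a)-\nu(a)|$. *)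

theory Defs
  imports "HOL-Analysis.Analysis"
begin

text \<open>State reached by a DFA with transition function delta from s0 after reading xs.
  run delta s0 (take (t-1) x) is the state s_t of the paper (1-indexed).\<close>
definition dfa_run :: "('s \<Rightarrow> 'a \<Rightarrow> 's) \<Rightarrow> 's \<Rightarrow> 'a list \<Rightarrow> 's" where
  "dfa_run delta s0 xs = foldl delta s0 xs"

definition string_prob :: "('s \<Rightarrow> 'a \<Rightarrow> real) \<Rightarrow> ('s \<Rightarrow> 'a \<Rightarrow> 's) \<Rightarrow> 's \<Rightarrow> 'a list \<Rightarrow> real" where
  "string_prob P delta s0 x = (\<Prod>t<length x. P (dfa_run delta s0 (take t x)) (x ! t))"

text \<open>Total variation distance without the factor 1/2, over a finite support set A.\<close>
definition tv :: "'b set \<Rightarrow> ('b \<Rightarrow> real) \<Rightarrow> ('b \<Rightarrow> real) \<Rightarrow> real" where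
  "tv A \<mu> \<nu> = (\<Sum>a\<in>A. \<bar>\<mu> a - \<nu> a\<bar>)"

definition strings_of_length :: "nat \<Rightarrow> 'a list set" where
  "strings_of_length T = {x. length x = T}"

end

theory Submission
  imports Defs
begin

lemma sp_nil: "string_prob P delta s [] = 1"
  by (simp add: string_prob_def)

lemma sp_cons: "string_prob P delta s (a # x) = P s a * string_prob P delta (delta s a) x"
proof -
  have "string_prob P delta s (a # x) = (\<Prod>t<Suc (length x). P (dfa_run delta s (take t (a#x))) ((a#x) ! t))"
    by (simp add: string_prob_def)
  also have "\<dots> = P s a * (\<Prod>t<length x. P (dfa_run delta s (take (Suc t) (a#x))) ((a#x) ! Suc t))"
    by (subst prod.lessThan_Suc_shift) (simp add: dfa_run_def)
  also have "\<dots> = P s a * string_prob P delta (delta s a) x"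
    by (simp add: string_prob_def dfa_run_def)
  finally show ?thesis .
qed

lemma fin_len: "finite {x::'a::finite list. length x = n}"
proof -
  have "{x::'a list. length x = n} = {xs. set xs \<subseteq> UNIV \<and> length xs = n}" by simp
  thus ?thesis using finite_lists_length_eq[of "UNIV::'a set" n] by simp
qed

lemma sum_len_Suc:
  fixes g :: "'a::finite list \<Rightarrow> real"
  shows "(\<Sum>x\<in>{x. length x = Suc n}. g x) = (\<Sum>a\<in>UNIV. \<Sum>x\<in>{x. length x = n}. g (a # x))"
proof -
  have eq: "{x::'a list. length x = Suc n} = (\<lambda>(a,x). a # x) ` (UNIV \<times> {x. length x = n})"
    by (auto simp: image_def length_Suc_conv)
  have inj: "inj_on (\<lambda>(a,x). a # x) (UNIV \<times> {x::'a list. length x = n})"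
    by (auto simp: inj_on_def)
  show ?thesis
    unfolding eq sum.reindex[OF inj] by (simp add: sum.cartesian_product split_def)
qed

lemma sum_sp:
  fixes P :: "'s \<Rightarrow> 'a::finite \<Rightarrow> real"
  assumes "\<And>s. (\<Sum>a\<in>UNIV. P s a) = 1"
  shows "(\<Sum>x\<in>{x. length x = n}. string_prob P delta s x) = 1"
proof (induction n arbitrary: s)
  case 0
  have "{x::'a list. length x = 0} = {[]}" by auto
  then show ?case by (simp add: sp_nil)
next
  case (Suc n)
  show ?case
    by (simp add: sum_len_Suc sp_cons sum_distrib_left[symmetric] Suc assms)
qed

lemma sp_nonneg:
  assumes "\<And>s a. P s a \<ge> 0"
  shows "string_prob P delta s x \<ge> 0"
  unfolding string_prob_def by (rule prod_nonneg) (simp add: assms)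

lemma main_bound:
  fixes P Q :: "'s \<Rightarrow> 'a::finite \<Rightarrow> real"
  assumes Pn: "\<And>s a. P s a \<ge> 0" and Ps: "\<And>s. (\<Sum>a\<in>UNIV. P s a) = 1"
    and Qn: "\<And>s a. Q s a \<ge> 0" and Qs: "\<And>s. (\<Sum>a\<in>UNIV. Q s a) = 1"
    and eps: "\<And>s. tv UNIV (P s) (Q s) \<le> e"
  shows "(\<Sum>x\<in>{x. length x = n}. \<bar>string_prob P delta s x - string_prob Q delta s x\<bar>) \<le> real n * e"
proof (induction n arbitrary: s)
  case 0
  have "{x::'a list. length x = 0} = {[]}" by auto
  then show ?case by (simp add: sp_nil)
next
  case (Suc n)
  let ?p = "string_prob P delta" and ?q = "string_prob Q delta"
  let ?L = "{x::'a list. length x = n}"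
  have "(\<Sum>x\<in>{x. length x = Suc n}. \<bar>?p s x - ?q s x\<bar>)
      = (\<Sum>a\<in>UNIV. \<Sum>x\<in>?L. \<bar>P s a * ?p (delta s a) x - Q s a * ?q (delta s a) x\<bar>)"
    by (simp add: sum_len_Suc sp_cons)
  also have "\<dots> \<le> (\<Sum>a\<in>UNIV. \<Sum>x\<in>?L. \<bar>P s a - Q s a\<bar> * ?p (delta s a) x + Q s a * \<bar>?p (delta s a) x - ?q (delta s a) x\<bar>)"
  proof (intro sum_mono)
    fix a x
    have h: "P s a * ?p (delta s a) x - Q s a * ?q (delta s a) x
          = (P s a - Q s a) * ?p (delta s a) x + Q s a * (?p (delta s a) x - ?q (delta s a) x)"
      by (simp add: algebra_simps)
    have "\<bar>(P s a - Q s a) * ?p (delta s a) x\<bar> = \<bar>P s a - Q s a\<bar> * ?p (delta s a) x"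
      using sp_nonneg[of P, OF Pn, of delta "delta s a" x] by (simp add: abs_mult)
    moreover have "\<bar>Q s a * (?p (delta s a) x - ?q (delta s a) x)\<bar> = Q s a * \<bar>?p (delta s a) x - ?q (delta s a) x\<bar>"
      using Qn by (simp add: abs_mult)
    ultimately show "\<bar>P s a * ?p (delta s a) x - Q s a * ?q (delta s a) x\<bar>
        \<le> \<bar>P s a - Q s a\<bar> * ?p (delta s a) x + Q s a * \<bar>?p (delta s a) x - ?q (delta s a) x\<bar>"
      unfolding h by (metis abs_triangle_ineq)
  qed
  also have "\<dots> = (\<Sum>a\<in>UNIV. \<bar>P s a - Q s a\<bar>) + (\<Sum>a\<in>UNIV. Q s a * (\<Sum>x\<in>?L. \<bar>?p (delta s a) x - ?q (delta s a) x\<bar>))"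
    by (simp add: sum.distrib sum_distrib_left[symmetric] sum_sp[OF Ps])
  also have "\<dots> \<le> e + (\<Sum>a\<in>UNIV. Q s a * (real n * e))"
    apply (rule add_mono)
    using eps[of s] apply (simp add: tv_def)
    apply (rule sum_mono)
    apply (rule mult_left_mono[OF Suc.IH Qn])
    done
  also have "\<dots> = e + (\<Sum>a\<in>UNIV. Q s a) * (real n * e)"
    by (simp add: sum_distrib_right)
  finally show ?case using Qs by (simp add: algebra_simps)
qed

theorem lemma4p2:
  fixes delta :: "'s::finite \<Rightarrow> 'a::finite \<Rightarrow> 's"
    and s0 :: 's and F :: "'s set"
    and T :: nat
    and P Q :: "'s \<Rightarrow> 'a \<Rightarrow> real"
  assumes "T \<ge> 1"
    and "\<And>s a. P s a \<ge> 0" and "\<And>s. (\<Sum>a\<in>UNIV. P s a) = 1"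
    and "\<And>s a. Q s a \<ge> 0" and "\<And>s. (\<Sum>a\<in>UNIV. Q s a) = 1"
  shows "tv (strings_of_length T) (string_prob P delta s0) (string_prob Q delta s0)
           \<le> 2 * real T * real (CARD('s)) ^ (T + 1)
               * (MAX s\<in>UNIV. tv UNIV (P s) (Q s))"
proof -
  define e where "e = (MAX s\<in>UNIV. tv UNIV (P s) (Q s))"
  have le: "tv UNIV (P s) (Q s) \<le> e" for s
    unfolding e_def by (rule Max_ge) auto
  have e0: "0 \<le> e"
    using le[of s0] by (rule order_trans[rotated]) (simp add: tv_def sum_nonneg)
  have "tv (strings_of_length T) (string_prob P delta s0) (string_prob Q delta s0) \<le> real T * e"
    unfolding tv_def strings_of_length_def
    by (rule main_bound[OF assms(2-5) le])
  also have "\<dots> \<le> 2 * real T * real (CARD('s)) ^ (T + 1) * e"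
  proof -
    have c: "1 \<le> real (CARD('s)) ^ (T + 1)"
      using finite_UNIV_card_ge_0[where 'a='s] by (intro one_le_power) simp
    have "real T * e * 1 \<le> real T * e * (2 * real (CARD('s)) ^ (T + 1))"
      by (rule mult_left_mono) (use c e0 in auto)
    thus ?thesis by (simp add: algebra_simps)
  qed
  finally show ?thesis unfolding e_def .
qed

end
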